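(* Let $J\subset\mathbb{R}\setminus\{0\}$ be compact and $f\in C([0,1])$ (complex valued). Define $\psi:[0,1)\times J\to\mathbb{C}$ by \[ \psi(y,\alpha):=\frac{e^{i\varphi(y,\alpha)}}{1-y}\int_y^1e^{-i\varphi(x,\alpha)}f(x)dx. \] Then $\psi$ extends to a continuous function on $[0,1]\times J$.
   Context: For $\alpha\in\mathbb{R}\setminus\{0\}$ and $y\in(-1,1)$, $\varphi(y,\alpha):=-\frac{2\alpha}{(1-y)^2}+\frac{2\alpha}{1-y}-\frac{2}{\alpha}\log(1-y)$. *)

theory Defs
  imports "HOL-Analysis.Analysis"
begin

definition phi :: "real \<Rightarrow> real \<Rightarrow> real" where
  "phi y \<alpha> = - 2 * \<alpha> / (1 - y)^2 + 2 * \<alpha> / (1 - y) - (2 / \<alpha>) * ln (1 - y)"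

definition psi :: "(real \<Rightarrow> complex) \<Rightarrow> real \<Rightarrow> real \<Rightarrow> complex" where
  "psi f y \<alpha> = (exp (\<i> * complex_of_real (phi y \<alpha>)) / complex_of_real (1 - y)) *
      integral {y..1} (\<lambda>x. exp (- \<i> * complex_of_real (phi x \<alpha>)) * f x)"

end

theory Submission
  imports Defs
begin

lemma g_deriv:
  assumes "\<alpha> \<noteq> 0" "s > 0"
  shows "((\<lambda>s. - 2 * \<alpha> / s^2 + 2 * \<alpha> / s - (2 / \<alpha>) * ln s) has_real_derivative
     (4*\<alpha>/s^3 - 2*\<alpha>/s^2 - 2/(\<alpha> * s))) (at s)"
  using assms
  apply (auto intro!: derivative_eq_intros)
  apply (auto simp: field_simps power2_eq_square power3_eq_cube eval_nat_numeral)
  done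

lemma phi_deriv:
  assumes "\<alpha> \<noteq> 0" "x < 1"
  shows "((\<lambda>x. phi x \<alpha>) has_real_derivative
     (-4*\<alpha>/(1-x)^3 + 2*\<alpha>/(1-x)^2 + 2/(\<alpha>*(1-x)))) (at x within S)"
proof -
  have 1: "((\<lambda>x. 1 - x) has_real_derivative (-1)) (at x within S)"
    by (auto intro!: derivative_eq_intros)
  have "((\<lambda>x. (\<lambda>s. - 2 * \<alpha> / s^2 + 2 * \<alpha> / s - (2 / \<alpha>) * ln s) (1 - x)) has_real_derivative
     (4*\<alpha>/(1-x)^3 - 2*\<alpha>/(1-x)^2 - 2/(\<alpha>*(1-x))) * (-1)) (at x within S)"
    using DERIV_chain2[OF g_deriv 1] assms by simp
  then show ?thesis unfolding phi_def by (rule DERIV_cong) (simp add: algebra_simps)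
qed

lemma E_deriv:
  assumes "\<alpha> \<noteq> 0" "x < 1"
  shows "((\<lambda>x. exp (- \<i> * complex_of_real (phi x \<alpha>))) has_vector_derivative
     (- \<i> * complex_of_real (-4*\<alpha>/(1-x)^3 + 2*\<alpha>/(1-x)^2 + 2/(\<alpha>*(1-x)))) * exp (- \<i> * complex_of_real (phi x \<alpha>))) (at x)"
proof -
  have "((\<lambda>x. - \<i> * complex_of_real (phi x \<alpha>)) has_vector_derivative
     (- \<i> * complex_of_real (-4*\<alpha>/(1-x)^3 + 2*\<alpha>/(1-x)^2 + 2/(\<alpha>*(1-x))))) (at x)"
    by (intro has_vector_derivative_mult_right has_vector_derivative_of_real phi_deriv assms)
  from field_vector_diff_chain_at[OF this DERIV_exp]
  show ?thesis by (simp add: o_def)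
qed


definition Eph :: "real \<Rightarrow> real \<Rightarrow> complex" where
  "Eph \<alpha> x = exp (- \<i> * complex_of_real (phi x \<alpha>))"

lemma norm_Eph [simp]: "norm (Eph \<alpha> x) = 1"
  unfolding Eph_def by (simp add: norm_exp_eq_Re)

lemma Eph_cont: assumes "\<alpha> \<noteq> 0" shows "continuous_on {..<1} (Eph \<alpha>)"
proof -
  have "continuous (at x) (Eph \<alpha>)" if "x < 1" for x
    using has_vector_derivative_continuous[OF E_deriv[OF assms that]] unfolding Eph_def by simp
  then show ?thesis by (simp add: continuous_on_eq_continuous_at)
qed

lemma int_sing:
  fixes g :: "real \<Rightarrow> complex"
  assumes "continuous_on {y<..<1} g" "\<And>x. x \<in> {y<..<1} \<Longrightarrow> norm (g x) \<le> B"
  shows "g integrable_on {y..1}"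
proof -
  have "g integrable_on {y<..<1}"
  proof (rule measurable_bounded_by_integrable_imp_integrable)
    show "g \<in> borel_measurable (lebesgue_on {y<..<1})"
      by (rule continuous_imp_measurable_on_sets_lebesgue[OF assms(1)]) auto
    show "(\<lambda>x. B) integrable_on {y<..<1}"
      by (subst integrable_on_open_interval_real) (rule integrable_const_ivl)
  qed (use assms in auto)
  then show ?thesis by (simp add: integrable_on_open_interval_real)
qed

lemma w_deriv:
  assumes "\<alpha> \<noteq> 0" "x < 1"
  shows "((\<lambda>x. \<i> * complex_of_real (- ((1-x)^3)/(4*\<alpha>)) * Eph \<alpha> x) has_vector_derivative
     ((1 + (complex_of_real (- ((1-x)/2) - (1-x)^2/(2*\<alpha>^2)) + \<i> * complex_of_real (3*(1-x)^2/(4*\<alpha>)))) * Eph \<alpha> x)) (at x within S)"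
proof -
  have v: "((\<lambda>x. - ((1-x)^3)/(4*\<alpha>)) has_real_derivative (3*(1-x)^2/(4*\<alpha>))) (at x within S)"
    using assms by (auto intro!: derivative_eq_intros simp: field_simps)
  have D: "((\<lambda>x. \<i> * complex_of_real (- ((1-x)^3)/(4*\<alpha>)) * Eph \<alpha> x) has_vector_derivative
     (\<i> * complex_of_real (- ((1-x)^3)/(4*\<alpha>)) * ((- \<i> * complex_of_real (-4*\<alpha>/(1-x)^3 + 2*\<alpha>/(1-x)^2 + 2/(\<alpha>*(1-x)))) * Eph \<alpha> x)
      + \<i> * complex_of_real (3*(1-x)^2/(4*\<alpha>)) * Eph \<alpha> x)) (at x within S)"
    unfolding Eph_def
    by (intro has_vector_derivative_mult has_vector_derivative_mult_right has_vector_derivative_of_real v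
        has_vector_derivative_at_within[OF E_deriv[OF assms]])
  have r: "(- ((1-x)^3)/(4*\<alpha>)) * (-4*\<alpha>/(1-x)^3 + 2*\<alpha>/(1-x)^2 + 2/(\<alpha>*(1-x))) = 1 - (1-x)/2 - (1-x)^2/(2*\<alpha>^2)"
  proof -
    have "\<And>s::real. s \<noteq> 0 \<Longrightarrow> (- (s^3)/(4*\<alpha>)) * (-4*\<alpha>/s^3 + 2*\<alpha>/s^2 + 2/(\<alpha> * s)) = 1 - s/2 - s^2/(2*\<alpha>^2)"
      using assms by (simp add: field_simps eval_nat_numeral)
    from this[of "1-x"] assms show ?thesis by simp
  qed
  have "\<i> * complex_of_real (- ((1-x)^3)/(4*\<alpha>)) * ((- \<i> * complex_of_real (-4*\<alpha>/(1-x)^3 + 2*\<alpha>/(1-x)^2 + 2/(\<alpha>*(1-x)))) * Eph \<alpha> x)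
      + \<i> * complex_of_real (3*(1-x)^2/(4*\<alpha>)) * Eph \<alpha> x
    = (complex_of_real ((- ((1-x)^3)/(4*\<alpha>)) * (-4*\<alpha>/(1-x)^3 + 2*\<alpha>/(1-x)^2 + 2/(\<alpha>*(1-x))))
       + \<i> * complex_of_real (3*(1-x)^2/(4*\<alpha>))) * Eph \<alpha> x"
    by (simp only: of_real_mult) (simp add: algebra_simps)
  also have "\<dots> = (1 + (complex_of_real (- ((1-x)/2) - (1-x)^2/(2*\<alpha>^2)) + \<i> * complex_of_real (3*(1-x)^2/(4*\<alpha>)))) * Eph \<alpha> x"
    unfolding r by simp
  finally show ?thesis using D by simp
qed


lemma R_bound:
  fixes \<alpha> a s x :: real
  assumes "0 < a" "a \<le> \<bar>\<alpha>\<bar>" "0 < 1 - x" "1 - x \<le> s" "s \<le> 1"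
  shows "norm (complex_of_real (- ((1-x)/2) - (1-x)^2/(2*\<alpha>^2)) + \<i> * complex_of_real (3*(1-x)^2/(4*\<alpha>)))
     \<le> (1/2 + 1/(2*a^2) + 3/(4*a)) * s"
proof -
  define t where "t = 1 - x"
  have t: "0 < t" "t \<le> s" "s \<le> 1" using assms by (auto simp: t_def)
  have t2: "t^2 \<le> s"
  proof -
    have "t * t \<le> t * 1" using t by (intro mult_left_mono) auto
    then have "t * t \<le> s" using t by linarith
    then show ?thesis by (simp add: power2_eq_square)
  qed
  have a2: "a^2 \<le> \<alpha>^2" using assms
    by (metis abs_ge_zero less_imp_le power2_abs power_mono)
  have "norm (complex_of_real (- (t/2) - t^2/(2*\<alpha>^2)) + \<i> * complex_of_real (3*t^2/(4*\<alpha>)))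
      \<le> norm (complex_of_real (- (t/2) - t^2/(2*\<alpha>^2))) + norm (\<i> * complex_of_real (3*t^2/(4*\<alpha>)))"
    by (rule norm_triangle_ineq)
  also have "\<dots> = t/2 + t^2/(2*\<alpha>^2) + 3*t^2/(4*\<bar>\<alpha>\<bar>)"
  proof -
    have "norm (complex_of_real (- (t/2) - t^2/(2*\<alpha>^2))) = \<bar>- (t/2) - t^2/(2*\<alpha>^2)\<bar>"
      by (rule norm_of_real)
    also have "\<dots> = t/2 + t^2/(2*\<alpha>^2)"
    proof -
      have nn: "0 \<le> t/2 + t^2/(2*\<alpha>^2)" using t by simp
      have "- (t/2) - t^2/(2*\<alpha>^2) = - (t/2 + t^2/(2*\<alpha>^2))" by simp
      then show ?thesis using nn by (simp only: abs_minus_cancel abs_of_nonneg)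
    qed
    finally have n1: "norm (complex_of_real (- (t/2) - t^2/(2*\<alpha>^2))) = t/2 + t^2/(2*\<alpha>^2)" .
    have "norm (\<i> * complex_of_real (3*t^2/(4*\<alpha>))) = norm \<i> * norm (complex_of_real (3*t^2/(4*\<alpha>)))"
      by (rule norm_mult)
    also have "\<dots> = \<bar>3*t^2/(4*\<alpha>)\<bar>" by (simp only: norm_ii norm_of_real mult_1)
    also have "\<dots> = 3*t^2/(4*\<bar>\<alpha>\<bar>)" by (simp add: abs_mult)
    finally show ?thesis using n1 by simp
  qed
  also have "\<dots> \<le> s/2 + s/(2*a^2) + 3 * s/(4*a)"
  proof -
    have 1: "t^2/(2*\<alpha>^2) \<le> s/(2*a^2)"
      using t2 a2 assms(1) t by (intro frac_le) auto
    have 2: "3*t^2/(4*\<bar>\<alpha>\<bar>) \<le> 3 * s/(4*a)"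
      using t2 assms t by (intro frac_le) auto
    show ?thesis using 1 2 t by simp
  qed
  also have "\<dots> = (1/2 + 1/(2*a^2) + 3/(4*a)) * s"
    by (simp add: field_simps)
  finally show ?thesis by (simp add: t_def)
qed

lemma osc_part:
  assumes "\<alpha> \<noteq> 0" "0 < a" "a \<le> \<bar>\<alpha>\<bar>" "y \<le> b" "b < 1" "1 - y \<le> 1"
  shows "norm (integral {y..b} (Eph \<alpha>)) \<le> (1/(2*a) + (1/2 + 1/(2*a^2) + 3/(4*a))) * (1-y)^2"
proof -
  define K0 where "K0 = 1/2 + 1/(2*a^2) + 3/(4*a)"
  define s where "s = 1 - y"
  define w where "w = (\<lambda>x. \<i> * complex_of_real (- ((1-x)^3)/(4*\<alpha>)) * Eph \<alpha> x)"
  define R where "R = (\<lambda>x. complex_of_real (- ((1-x)/2) - (1-x)^2/(2*\<alpha>^2)) + \<i> * complex_of_real (3*(1-x)^2/(4*\<alpha>)))"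
  have FTC: "((\<lambda>x. (1 + R x) * Eph \<alpha> x) has_integral (w b - w y)) {y..b}"
    unfolding w_def R_def
    by (rule fundamental_theorem_of_calculus, use assms in simp, rule w_deriv, use assms in auto)
  have cE: "continuous_on {y..b} (Eph \<alpha>)"
    by (rule continuous_on_subset[OF Eph_cont[OF assms(1)]]) (use assms in auto)
  have intE: "Eph \<alpha> integrable_on {y..b}"
    by (rule integrable_continuous_real[OF cE])
  have intRE: "(\<lambda>x. R x * Eph \<alpha> x) integrable_on {y..b}"
    unfolding R_def
    by (intro integrable_continuous_real continuous_intros cE) (use assms in auto)
  have "integral {y..b} (\<lambda>x. (1 + R x) * Eph \<alpha> x) = integral {y..b} (Eph \<alpha>) + integral {y..b} (\<lambda>x. R x * Eph \<alpha> x)"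
    by (subst integral_add[symmetric]) (use intE intRE in \<open>auto simp: algebra_simps\<close>)
  then have eq: "integral {y..b} (Eph \<alpha>) = (w b - w y) - integral {y..b} (\<lambda>x. R x * Eph \<alpha> x)"
    using FTC by (simp add: integral_unique)
  have wbound: "norm (w x) \<le> s^2/(4*a)" if "y \<le> x" "x < 1" for x
  proof -
    have "norm (w x) = (1-x)^3/(4*\<bar>\<alpha>\<bar>)"
    proof -
      have "norm (w x) = \<bar>- ((1-x)^3)/(4*\<alpha>)\<bar>"
        unfolding w_def by (simp only: norm_mult norm_of_real norm_Eph) simp
      also have "\<dots> = (1-x)^3/(4*\<bar>\<alpha>\<bar>)" using that by (simp add: abs_mult)
      finally show ?thesis .
    qed
    also have "\<dots> \<le> s^2/(4*a)"
    proof (intro frac_le)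
      have "(1-x)^3 \<le> s^3" using that by (intro power_mono) (auto simp: s_def)
      also have "s^3 \<le> s^2" using assms by (intro power_decreasing) (auto simp: s_def)
      finally show "(1-x)^3 \<le> s^2" .
    qed (use that assms in auto)
    finally show ?thesis .
  qed
  have Rint: "norm (integral {y..b} (\<lambda>x. R x * Eph \<alpha> x)) \<le> (K0 * s) * Henstock_Kurzweil_Integration.content (cbox y b)"
  proof (rule has_integral_bound)
    show "0 \<le> K0 * s" using assms by (auto simp: K0_def s_def)
    show "((\<lambda>x. R x * Eph \<alpha> x) has_integral integral {y..b} (\<lambda>x. R x * Eph \<alpha> x)) (cbox y b)"
      using intRE by (simp add: has_integral_integral)
    fix x assume x: "x \<in> cbox y b"
    have "norm (R x * Eph \<alpha> x) = norm (R x)" by (simp add: norm_mult)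
    also have "\<dots> \<le> K0 * s"
      unfolding R_def K0_def by (rule R_bound) (use x assms in \<open>auto simp: s_def\<close>)
    finally show "norm (R x * Eph \<alpha> x) \<le> K0 * s" .
  qed
  have "K0 * s * Henstock_Kurzweil_Integration.content (cbox y b) \<le> K0 * s * s"
    using assms by (intro mult_left_mono) (auto simp: K0_def s_def)
  with Rint have Rint': "norm (integral {y..b} (\<lambda>x. R x * Eph \<alpha> x)) \<le> K0 * s^2"
    by (simp add: power2_eq_square mult.assoc)
  have "norm (integral {y..b} (Eph \<alpha>)) \<le> norm (w b) + norm (w y) + norm (integral {y..b} (\<lambda>x. R x * Eph \<alpha> x))"
  proof -
    have "norm ((w b - w y) - integral {y..b} (\<lambda>x. R x * Eph \<alpha> x)) \<le> norm (w b - w y) + norm (integral {y..b} (\<lambda>x. R x * Eph \<alpha> x))"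
      by (rule norm_triangle_ineq4)
    moreover have "norm (w b - w y) \<le> norm (w b) + norm (w y)" by (rule norm_triangle_ineq4)
    ultimately show ?thesis unfolding eq by linarith
  qed
  also have "\<dots> \<le> s^2/(4*a) + s^2/(4*a) + K0 * s^2"
    using wbound[of b] wbound[of y] Rint' assms by (intro add_mono) auto
  also have "\<dots> = (1/(2*a) + K0) * s^2" by (simp add: field_simps)
  finally show ?thesis by (simp add: K0_def s_def)
qed


lemma osc:
  assumes "\<alpha> \<noteq> 0" "0 < a" "a \<le> \<bar>\<alpha>\<bar>" "y < 1" "1 - y \<le> 1"
  shows "norm (integral {y..1} (Eph \<alpha>)) \<le> (1/(2*a) + (1/2 + 1/(2*a^2) + 3/(4*a))) * (1-y)^2"
proof (rule field_le_epsilon)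
  fix e :: real assume e: "0 < e"
  define b where "b = max y (1 - e/2)"
  have b: "y \<le> b" "b < 1" "1 - b \<le> e" using e assms by (auto simp: b_def)
  have intE: "Eph \<alpha> integrable_on {y..1}"
    by (rule int_sing[where B=1], rule continuous_on_subset[OF Eph_cont[OF assms(1)]]) auto
  have split: "integral {y..1} (Eph \<alpha>) = integral {y..b} (Eph \<alpha>) + integral {b..1} (Eph \<alpha>)"
    by (rule Henstock_Kurzweil_Integration.integral_combine[symmetric]) (use b intE in auto)
  have intb: "Eph \<alpha> integrable_on {b..1}"
    by (rule integrable_subinterval_real[OF intE]) (use b in auto)
  have "norm (integral {b..1} (Eph \<alpha>)) \<le> 1 * Henstock_Kurzweil_Integration.content (cbox b 1)"
    by (rule has_integral_bound) (use intb in \<open>auto simp: has_integral_integral\<close>)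
  then have t: "norm (integral {b..1} (Eph \<alpha>)) \<le> e" using b by simp
  have "norm (integral {y..1} (Eph \<alpha>)) \<le> norm (integral {y..b} (Eph \<alpha>)) + norm (integral {b..1} (Eph \<alpha>))"
    unfolding split by (rule norm_triangle_ineq)
  also have "\<dots> \<le> (1/(2*a) + (1/2 + 1/(2*a^2) + 3/(4*a))) * (1-y)^2 + e"
    using osc_part[OF assms(1-3) b(1,2) assms(5)] t by linarith
  finally show "norm (integral {y..1} (Eph \<alpha>)) \<le> (1/(2*a) + (1/2 + 1/(2*a^2) + 3/(4*a))) * (1-y)^2 + e" .
qed

lemma phi_cont2: "continuous_on {p. fst p < 1 \<and> snd p \<noteq> 0} (\<lambda>p. phi (fst p) (snd p))"
  unfolding phi_def by (intro continuous_intros) auto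

lemma Eph_cont2: "continuous_on {p. fst p < 1 \<and> snd p \<noteq> 0} (\<lambda>p. Eph (snd p) (fst p))"
  unfolding Eph_def by (intro continuous_intros continuous_on_compose2[OF phi_cont2]) auto


lemma psi_alt: "psi f y \<alpha> = exp (\<i> * complex_of_real (phi y \<alpha>)) / complex_of_real (1 - y) * integral {y..1} (\<lambda>x. Eph \<alpha> x * f x)"
  by (simp add: psi_def Eph_def)

lemma stretch01:
  fixes h :: "real \<Rightarrow> complex"
  assumes "0 \<le> y"
  shows "integral {0..y} h = complex_of_real y * integral {0..1} (\<lambda>t. h (y * t))"
proof (cases "y = 0")
  case True then show ?thesis by simp
next
  case False
  with assms have y: "0 < y" by simp
  have img: "(\<lambda>x. x / y) ` {0..y} = {0..1}"
  proof
    show "(\<lambda>x. x / y) ` {0..y} \<subseteq> {0..1}" using y by (auto simp: field_simps)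
    show "{0..1} \<subseteq> (\<lambda>x. x / y) ` {0..y}"
    proof
      fix t :: real assume "t \<in> {0..1}"
      then have "y * t \<in> {0..y}" "t = (y * t) / y" using y by (auto simp: mult_le_cancel_left1)
      then show "t \<in> (\<lambda>x. x / y) ` {0..y}" by blast
    qed
  qed
  have "integral {0..1} (\<lambda>t. h (y * t)) = (1 / \<bar>y\<bar>) *\<^sub>R integral {0..y} h"
    using integral_stretch_real[of y 0 y h] y img by simp
  then show ?thesis using y by (simp add: scaleR_conv_of_real)
qed


theorem lemma3p34:
  fixes J :: "real set" and f :: "real \<Rightarrow> complex"
  assumes "compact J" and "0 \<notin> J"
    and "continuous_on {0..1} f"
  shows "\<exists>g :: real \<times> real \<Rightarrow> complex.
           continuous_on ({0..1} \<times> J) g \<and>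
           (\<forall>y \<in> {0..<1}. \<forall>\<alpha> \<in> J. g (y, \<alpha>) = psi f y \<alpha>)"
proof -
  note fc = assms(3)
  have J0: "\<alpha> \<noteq> 0" if "\<alpha> \<in> J" for \<alpha> using that assms(2) by auto
  obtain a where a: "0 < a" "\<And>\<alpha>. \<alpha> \<in> J \<Longrightarrow> a \<le> \<bar>\<alpha>\<bar>"
  proof -
    have "open (- J)" using assms(1) by (simp add: compact_imp_closed open_Compl)
    moreover have "0 \<in> - J" using assms(2) by simp
    ultimately obtain r where r: "0 < r" "ball 0 r \<subseteq> - J" by (meson open_contains_ball)
    show ?thesis
    proof (rule that[OF r(1)])
      fix \<alpha> assume "\<alpha> \<in> J"
      then have "\<alpha> \<notin> ball 0 r" using r by auto
      then show "r \<le> \<bar>\<alpha>\<bar>" by (simp add: dist_real_def)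
    qed
  qed
  obtain M where M: "0 < M" "\<And>x. x \<in> {0..1} \<Longrightarrow> norm (f x) \<le> M"
  proof -
    have "bounded (f ` {0..1})" by (intro compact_imp_bounded compact_continuous_image fc) auto
    then show ?thesis using that by (auto simp: bounded_pos)
  qed
  define F where "F = (\<lambda>\<alpha> x. Eph \<alpha> x * f x)"
  have normF: "norm (F \<alpha> x) \<le> M" if "x \<in> {0..1}" for \<alpha> x
    using M(2)[OF that] by (simp add: F_def norm_mult)
  have intF: "F \<alpha> integrable_on {y..1}" if "\<alpha> \<in> J" "0 \<le> y" for \<alpha> y
  proof (rule int_sing[where B=M])
    show "continuous_on {y<..<1} (F \<alpha>)"
      unfolding F_def
      by (intro continuous_intros continuous_on_subset[OF Eph_cont[OF J0[OF that(1)]]]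
          continuous_on_subset[OF fc]) (use that in auto)
  qed (use that normF in auto)
  define U where "U = {0..<(1::real)} \<times> J"
  define S where "S = (\<lambda>p. integral {0..fst p} (F (snd p)))"
  have contS': "continuous_on U (\<lambda>p. complex_of_real (fst p) * integral (cbox 0 1) (\<lambda>t. F (snd p) (fst p * t)))"
  proof (intro continuous_intros integral_continuous_on_param)
    have c1: "continuous_on (U \<times> cbox 0 1) (\<lambda>z. Eph (snd (fst z)) (fst (fst z) * snd z))"
    proof (rule continuous_on_compose2[OF Eph_cont2, of _ "\<lambda>z. (fst (fst z) * snd z, snd (fst z))", simplified])
      show "continuous_on (U \<times> cbox 0 1) (\<lambda>z. (fst (fst z) * snd z, snd (fst z)))"
        by (intro continuous_intros)
      show "(\<lambda>z. (fst (fst z) * snd z, snd (fst z))) ` (U \<times> cbox 0 1) \<subseteq> {p. fst p < 1 \<and> snd p \<noteq> 0}"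
      proof clarsimp
        fix y \<alpha> t :: real assume "(y, \<alpha>) \<in> U" "0 \<le> t" "t \<le> 1"
        then show "y * t < 1 \<and> \<alpha> \<noteq> 0" using J0 unfolding U_def
          by (auto intro: le_less_trans[OF mult_left_le])
      qed
    qed
    have c2: "continuous_on (U \<times> cbox 0 1) (\<lambda>z. f (fst (fst z) * snd z))"
    proof (rule continuous_on_compose2[OF fc])
      show "continuous_on (U \<times> cbox 0 1) (\<lambda>z. fst (fst z) * snd z)"
        by (intro continuous_intros)
      show "(\<lambda>z. fst (fst z) * snd z) ` (U \<times> cbox 0 1) \<subseteq> {0..1}"
        unfolding U_def by (auto intro!: mult_le_one)
    qed
    show "continuous_on (U \<times> cbox 0 1) (\<lambda>(x, t). F (snd x) (fst x * t))"
      unfolding F_def split_beta using continuous_on_mult[OF c1 c2] by simp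
  qed
  have contS: "continuous_on U S"
  proof (rule continuous_on_eq[OF contS'])
    fix p assume "p \<in> U"
    then show "complex_of_real (fst p) * integral (cbox 0 1) (\<lambda>t. F (snd p) (fst p * t)) = S p"
      unfolding S_def U_def by (subst stretch01) auto
  qed
  have contT: "continuous_on J (\<lambda>\<alpha>. integral {0..1} (F \<alpha>))"
  proof (rule uniform_limit_theorem[where F="at_left 1" and f="\<lambda>c \<alpha>. S (c, \<alpha>)"])
    have "\<forall>\<^sub>F c in at_left (1::real). c \<in> {0<..<1}"
      by (rule eventually_at_left_real) simp
    then show "\<forall>\<^sub>F c in at_left (1::real). continuous_on J (\<lambda>\<alpha>. S (c, \<alpha>))"
    proof eventually_elim
      case (elim c)
      show ?case
        by (rule continuous_on_compose2[OF contS, of _ "\<lambda>\<alpha>. (c, \<alpha>)"]) 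
           (use elim in \<open>auto simp: U_def intro!: continuous_intros\<close>)
    qed
    show "uniform_limit J (\<lambda>c \<alpha>. S (c, \<alpha>)) (\<lambda>\<alpha>. integral {0..1} (F \<alpha>)) (at_left 1)"
    proof (rule uniform_limitI)
      fix e :: real assume e: "0 < e"
      have "\<forall>\<^sub>F c in at_left (1::real). c \<in> {max 0 (1 - e/(2*M))<..<1}"
        by (rule eventually_at_left_real) (use e M in auto)
      then show "\<forall>\<^sub>F c in at_left 1. \<forall>\<alpha>\<in>J. dist (S (c, \<alpha>)) (integral {0..1} (F \<alpha>)) < e"
      proof eventually_elim
        case (elim c)
        show ?case
        proof
          fix \<alpha> assume \<alpha>: "\<alpha> \<in> J"
          have c: "0 < c" "c < 1" "1 - c < e/(2*M)" using elim by auto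
          have "integral {0..1} (F \<alpha>) = S (c, \<alpha>) + integral {c..1} (F \<alpha>)"
            unfolding S_def prod.sel
            by (rule Henstock_Kurzweil_Integration.integral_combine[symmetric]) (use c intF[OF \<alpha>, of 0] in auto)
          then have "dist (S (c, \<alpha>)) (integral {0..1} (F \<alpha>)) = norm (integral {c..1} (F \<alpha>))"
            by (simp add: dist_norm norm_minus_commute)
          also have "\<dots> \<le> M * Henstock_Kurzweil_Integration.content (cbox c 1)"
            by (rule has_integral_bound) (use M c intF[OF \<alpha>, of c] normF in \<open>auto simp: has_integral_integral\<close>)
          also have "\<dots> = M * (1 - c)" using c by simp
          also have "\<dots> < M * (e / (2*M))" using c M by (intro mult_strict_left_mono) auto
          also have "\<dots> < e" using M e by simp
          finally show "dist (S (c, \<alpha>)) (integral {0..1} (F \<alpha>)) < e" .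
        qed
      qed
    qed
  qed simp
  have contI: "continuous_on U (\<lambda>p. integral {fst p..1} (F (snd p)))"
  proof (rule continuous_on_eq)
    show "continuous_on U (\<lambda>p. integral {0..1} (F (snd p)) - S p)"
      by (intro continuous_intros contS continuous_on_compose2[OF contT]) (auto simp: U_def)
    fix p assume "p \<in> U"
    then have p: "0 \<le> fst p" "fst p < 1" "snd p \<in> J" by (auto simp: U_def)
    have "integral {0..1} (F (snd p)) = S p + integral {fst p..1} (F (snd p))"
      unfolding S_def
      by (rule Henstock_Kurzweil_Integration.integral_combine[symmetric]) (use p intF[OF p(3), of 0] in auto)
    then show "integral {0..1} (F (snd p)) - S p = integral {fst p..1} (F (snd p))" by simp
  qed
  have contPsi: "continuous_on U (\<lambda>p. psi f (fst p) (snd p))"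
  proof -
    have "continuous_on U (\<lambda>p. exp (\<i> * complex_of_real (phi (fst p) (snd p))) / complex_of_real (1 - fst p) * integral {fst p..1} (F (snd p)))"
      by (intro continuous_intros contI continuous_on_compose2[OF phi_cont2])
         (auto simp: U_def dest: J0)
    then show ?thesis by (simp add: psi_alt F_def)
  qed
  define Ko where "Ko = (1/(2*a) + (1/2 + 1/(2*a^2) + 3/(4*a)))"
  have Ko: "0 \<le> Ko" using a by (simp add: Ko_def)
  have est: "\<exists>d>0. \<forall>y \<alpha>. 0 \<le> y \<longrightarrow> y < 1 \<longrightarrow> 1 - y < d \<longrightarrow> \<alpha> \<in> J \<longrightarrow> norm (psi f y \<alpha>) < e"
    if e: "e > 0" for e
  proof -
    have "1 \<in> {0..(1::real)}" by simp
    with fc e obtain d1 where d1: "d1 > 0" "\<And>x. x \<in> {0..1} \<Longrightarrow> dist x 1 < d1 \<Longrightarrow> dist (f x) (f 1) < e/2"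
      unfolding continuous_on_iff by (metis half_gt_zero)
    define C where "C = norm (f 1) * Ko + 1"
    have C: "C > 0" using Ko by (simp add: C_def add_nonneg_pos)
    define d where "d = min d1 (min 1 (e/(2*C)))"
    have "d > 0" using d1 C e by (simp add: d_def)
    moreover have "norm (psi f y \<alpha>) < e" if y: "0 \<le> y" "y < 1" "1 - y < d" and \<alpha>: "\<alpha> \<in> J" for y \<alpha>
    proof -
      define s where "s = 1 - y"
      have s: "0 < s" "s < d1" "s \<le> 1" "C * s < e/2"
      proof -
        show "0 < s" "s < d1" "s \<le> 1" using y by (auto simp: s_def d_def)
        have "s < e/(2*C)" using y by (auto simp: s_def d_def)
        then show "C * s < e/2" using C by (simp add: field_simps)
      qed
      define G where "G = (\<lambda>x. Eph \<alpha> x * (f x - f 1))"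
      have intE: "Eph \<alpha> integrable_on {y..1}"
        by (rule int_sing[where B=1], rule continuous_on_subset[OF Eph_cont[OF J0[OF \<alpha>]]]) auto
      have intG: "G integrable_on {y..1}"
      proof (rule int_sing[where B="2*M"])
        show "continuous_on {y<..<1} G"
          unfolding G_def
          by (intro continuous_intros continuous_on_subset[OF Eph_cont[OF J0[OF \<alpha>]]]
              continuous_on_subset[OF fc]) (use y in auto)
        fix x assume "x \<in> {y<..<1}"
        then have "x \<in> {0..1}" using y by auto
        then have "norm (f x - f 1) \<le> norm (f x) + norm (f 1)" "norm (f x) \<le> M" "norm (f 1) \<le> M"
          using M(2) by (auto simp: norm_triangle_ineq4)
        then show "norm (G x) \<le> 2 * M" by (simp add: G_def norm_mult)
      qed
      have "integral {y..1} (F \<alpha>) = integral {y..1} (\<lambda>x. f 1 * Eph \<alpha> x + G x)"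
        by (rule integral_cong) (simp add: F_def G_def algebra_simps)
      also have "\<dots> = f 1 * integral {y..1} (Eph \<alpha>) + integral {y..1} G"
        by (subst integral_add) (use intE intG in \<open>auto intro: integrable_on_mult_right\<close>)
      finally have split: "integral {y..1} (F \<alpha>) = f 1 * integral {y..1} (Eph \<alpha>) + integral {y..1} G" .
      have b1: "norm (f 1 * integral {y..1} (Eph \<alpha>)) \<le> norm (f 1) * (Ko * s^2)"
        unfolding norm_mult Ko_def s_def
        by (intro mult_left_mono osc J0 \<alpha> a) (use y in auto)
      have b2: "norm (integral {y..1} G) \<le> (e/2) * Henstock_Kurzweil_Integration.content (cbox y 1)"
      proof (rule has_integral_bound)
        show "(G has_integral integral {y..1} G) (cbox y 1)" using intG by (simp add: has_integral_integral)
        fix x assume x: "x \<in> cbox y 1"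
        then have "x \<in> {0..1}" "dist x 1 < d1" using y s by (auto simp: dist_real_def s_def)
        then have "norm (f x - f 1) < e/2" using d1(2) by (simp add: dist_norm)
        then show "norm (G x) \<le> e/2" by (simp add: G_def norm_mult)
      qed (use e in auto)
      have b2': "norm (integral {y..1} G) \<le> (e/2) * s" using b2 y by (simp add: s_def)
      have ne: "norm (exp (\<i> * complex_of_real r)) = 1" for r by (simp add: norm_exp_eq_Re)
      have "norm (psi f y \<alpha>) = norm (exp (\<i> * complex_of_real (phi y \<alpha>))) / norm (complex_of_real (1 - y)) * norm (integral {y..1} (F \<alpha>))"
        by (simp only: psi_alt F_def norm_mult norm_divide)
      also have "\<dots> = 1 / \<bar>1 - y\<bar> * norm (integral {y..1} (F \<alpha>))"
        by (simp only: ne norm_of_real)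
      also have "\<dots> = norm (integral {y..1} (F \<alpha>)) / s" using y by (simp add: s_def)
      finally have "norm (psi f y \<alpha>) = norm (integral {y..1} (F \<alpha>)) / s" .
      also have "\<dots> \<le> (norm (f 1) * (Ko * s^2) + (e/2) * s) / s"
        unfolding split using b1 b2' s
        by (intro divide_right_mono order_trans[OF norm_triangle_ineq]) auto
      also have "\<dots> = norm (f 1) * Ko * s + e/2" using s by (simp add: field_simps power2_eq_square)
      also have "\<dots> < e"
      proof -
        have "norm (f 1) * Ko * s \<le> C * s" using s by (intro mult_right_mono) (auto simp: C_def)
        then show ?thesis using s by linarith
      qed
      finally show ?thesis .
    qed
    ultimately show ?thesis by blast
  qed
  define g where "g = (\<lambda>p. if fst p < 1 then psi f (fst p) (snd p) else 0)"
  have "continuous_on ({0..1} \<times> J) g"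
    unfolding continuous_on_eq_continuous_within
  proof
    fix p :: "real \<times> real" assume p: "p \<in> {0..1} \<times> J"
    show "continuous (at p within {0..1} \<times> J) g"
    proof (cases "fst p < 1")
      case True
      then have pU: "p \<in> U" using p by (auto simp: U_def)
      have cp: "continuous (at p within U) (\<lambda>p. psi f (fst p) (snd p))"
        using contPsi pU by (simp add: continuous_on_eq_continuous_within)
      show ?thesis
        unfolding continuous_within_eps_delta
      proof (intro allI impI)
        fix e :: real assume e: "0 < e"
        obtain d where d: "d > 0" "\<And>q. q \<in> U \<Longrightarrow> dist q p < d \<Longrightarrow> dist (psi f (fst q) (snd q)) (psi f (fst p) (snd p)) < e"
          using cp e unfolding continuous_within_eps_delta by metis
        show "\<exists>d>0. \<forall>q\<in>{0..1} \<times> J. dist q p < d \<longrightarrow> dist (g q) (g p) < e"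
        proof (intro exI[of _ "min d (1 - fst p)"] conjI ballI impI)
          show "0 < min d (1 - fst p)" using d True by simp
          fix q :: "real \<times> real" assume q: "q \<in> {0..1} \<times> J" "dist q p < min d (1 - fst p)"
          have "dist (fst q) (fst p) < 1 - fst p" using dist_fst_le[of q p] q by linarith
          then have "fst q < 1" by (simp add: dist_real_def)
          then have "q \<in> U" using q by (auto simp: U_def mem_Times_iff)
          then show "dist (g q) (g p) < e" using d(2)[of q] q \<open>fst q < 1\<close> True by (simp add: g_def)
        qed
      qed
    next
      case False
      then have p1: "fst p = 1" using p by auto
      show ?thesis
        unfolding continuous_within_eps_delta
      proof (intro allI impI)
        fix e :: real assume e: "0 < e"
        obtain d where d: "d > 0" "\<And>y \<alpha>. 0 \<le> y \<Longrightarrow> y < 1 \<Longrightarrow> 1 - y < d \<Longrightarrow> \<alpha> \<in> J \<Longrightarrow> norm (psi f y \<alpha>) < e"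
          using est[OF e] by blast
        show "\<exists>d>0. \<forall>q\<in>{0..1} \<times> J. dist q p < d \<longrightarrow> dist (g q) (g p) < e"
        proof (intro exI[of _ d] conjI ballI impI)
          show "0 < d" by (rule d(1))
          fix q :: "real \<times> real" assume q: "q \<in> {0..1} \<times> J" "dist q p < d"
          have "dist (fst q) (fst p) < d" using dist_fst_le[of q p] q by linarith
          then have "1 - fst q < d" using p1 by (simp add: dist_real_def)
          then show "dist (g q) (g p) < e"
            using d(2)[of "fst q" "snd q"] q p1 e by (auto simp: g_def mem_Times_iff)
        qed
      qed
    qed
  qed
  moreover have "\<forall>y \<in> {0..<1}. \<forall>\<alpha> \<in> J. g (y, \<alpha>) = psi f y \<alpha>"
    by (simp add: g_def)
  ultimately show ?thesis by blast
qed

end
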